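(* Let $a>0$ and let $J$ be a kernel on $\mathbb{H}^1_L$ such that $J(e)\ge aL\log(j)L^{-2j}$ for every edge $e$ with $|e|=L^j$. Then for all $k\in\mathbb{N}$ there is a constant $C=C(k,J)$ such that for every $n\ge1$ and every $\gamma\in\{L^{-k},2L^{-k},\ldots,1-L^{-k},1\}$, \[\mathbb{P}_J(\Lambda_{n,n+k}\text{ is not connected})\le Cn^{-a/2}\quad\text{and}\quad\mathbb{P}_J(\Lambda_{n,n+k}\text{ has a cluster of density }\gamma)\le Cn^{-a(1-\gamma)}.\]
   Context: $\mathbb{H}^1_L$ ($L\ge2$ an integer) is the group $\bigoplus_{i=1}^\infty\mathbb{Z}/L\mathbb{Z}$ with ultrametric $\|x-y\|=L^{\max\{i:x_i\neq y_i\}}$ for $x\neq y$; $\Lambda_n(x)$ is the ball of radius $L^n$ around $x$ (an $n$-block). Edges are unordered pairs of distinct vertices with $|e|=\|x-y\|$; a kernel is any $J:E\to[0,\infty)$. $\mathbb{P}_J$: each edge open independently with probability $1-\exp(-J(e))$, giving configuration $\omega$. $\Lambda_{n,n+k}$ is the set of the $L^k$ $n$-blocks contained in $\Lambda_{n+k}(0)$, regarded as the vertex set of the random graph $\omega_{n,n+k}$ in which two distinct $n$-blocks are adjacent iff some open edge of $\omega$ has one endpoint in each. "$\Lambda_{n,n+k}$ is not connected" means $\omega_{n,n+k}$ is not connected; "has a cluster of density $\gamma$" means $\omega_{n,n+k}$ has a connected component consisting of exactly $\gamma L^k$ blocks. *)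

theory Defs
  imports "HOL-Analysis.Analysis" "HOL-Probability.Product_PMF"
begin

text \<open>Vertices of H^1_L: sequences x :: nat => nat, coordinates indexed from 1
  (x 0 = 0 is a dummy), each x i in {0..L-1}, finitely supported.\<close>
definition hvert :: "nat \<Rightarrow> (nat \<Rightarrow> nat) set" where
  "hvert L = {x. (\<forall>i. x i < L) \<and> x 0 = 0 \<and> finite {i. x i \<noteq> 0}}"

text \<open>For x ~= y, the distance is L ^ hdexp x y.\<close>
definition hdexp :: "(nat \<Rightarrow> nat) \<Rightarrow> (nat \<Rightarrow> nat) \<Rightarrow> nat" where
  "hdexp x y = Max {i. x i \<noteq> y i}"

definition hedges :: "nat \<Rightarrow> (nat \<Rightarrow> nat) set set" where
  "hedges L = {{x, y} | x y. x \<in> hvert L \<and> y \<in> hvert L \<and> x \<noteq> y}"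

text \<open>Ball of radius L^n around x (an n-block).\<close>
definition hball :: "nat \<Rightarrow> nat \<Rightarrow> (nat \<Rightarrow> nat) \<Rightarrow> (nat \<Rightarrow> nat) set" where
  "hball L n x = {y \<in> hvert L. \<forall>i>n. y i = x i}"

definition box_edges :: "nat \<Rightarrow> nat \<Rightarrow> (nat \<Rightarrow> nat) set set" where
  "box_edges L N = {{x, y} | x y. x \<in> hball L N (\<lambda>_. 0) \<and> y \<in> hball L N (\<lambda>_. 0) \<and> x \<noteq> y}"

definition blocks :: "nat \<Rightarrow> nat \<Rightarrow> nat \<Rightarrow> (nat \<Rightarrow> nat) set set" where
  "blocks L n k = {hball L n x | x. x \<in> hball L (n + k) (\<lambda>_. 0)}"

definition block_adj ::
  "nat \<Rightarrow> nat \<Rightarrow> nat \<Rightarrow> ((nat \<Rightarrow> nat) set \<Rightarrow> bool) \<Rightarrow> (nat \<Rightarrow> nat) set \<Rightarrow> (nat \<Rightarrow> nat) set \<Rightarrow> bool" where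
  "block_adj L n k \<omega> B1 B2 \<longleftrightarrow> B1 \<in> blocks L n k \<and> B2 \<in> blocks L n k \<and> B1 \<noteq> B2 \<and>
     (\<exists>x\<in>B1. \<exists>y\<in>B2. \<omega> {x, y})"

definition blocks_connected :: "nat \<Rightarrow> nat \<Rightarrow> nat \<Rightarrow> ((nat \<Rightarrow> nat) set \<Rightarrow> bool) \<Rightarrow> bool" where
  "blocks_connected L n k \<omega> \<longleftrightarrow>
     (\<forall>B1\<in>blocks L n k. \<forall>B2\<in>blocks L n k. (block_adj L n k \<omega>)\<^sup>*\<^sup>* B1 B2)"

definition has_cluster_of_size :: "nat \<Rightarrow> nat \<Rightarrow> nat \<Rightarrow> ((nat \<Rightarrow> nat) set \<Rightarrow> bool) \<Rightarrow> nat \<Rightarrow> bool" where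
  "has_cluster_of_size L n k \<omega> m \<longleftrightarrow>
     (\<exists>B\<in>blocks L n k. card {B'. (block_adj L n k \<omega>)\<^sup>*\<^sup>* B B'} = m)"

text \<open>Law of the restriction of omega (under P_J) to the finitely many edges inside
  Lambda_N(0); edges outside are set to closed (they do not affect the events).\<close>
definition perc_pmf :: "nat \<Rightarrow> ((nat \<Rightarrow> nat) set \<Rightarrow> real) \<Rightarrow> nat \<Rightarrow> ((nat \<Rightarrow> nat) set \<Rightarrow> bool) pmf" where
  "perc_pmf L J N = Pi_pmf (box_edges L N) False (\<lambda>e. bernoulli_pmf (1 - exp (- J e)))"

end

theory Submission
  imports Defs
begin


lemma hvert_upd:
  assumes "z \<in> hvert L" "c < L" "j > 0"
  shows "z(j := c) \<in> hvert L"
proof -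
  have s: "{i. (z(j := c)) i \<noteq> 0} \<subseteq> insert j {i. z i \<noteq> 0}" by auto
  have "finite {i. z i \<noteq> 0}" using assms(1) unfolding hvert_def by blast
  then have "finite {i. (z(j := c)) i \<noteq> 0}" using s finite_subset by blast
  then show ?thesis using assms unfolding hvert_def by auto
qed

lemma hball_Suc:
  "hball L (Suc N) z = (\<Union>c<L. hball L N (z(Suc N := c)))"
proof (intro equalityI subsetI)
  fix y assume y: "y \<in> hball L (Suc N) z"
  then have "y (Suc N) < L" by (auto simp: hball_def hvert_def)
  moreover have "y \<in> hball L N (z(Suc N := y (Suc N)))"
    using y by (auto simp: hball_def)
  ultimately show "y \<in> (\<Union>c<L. hball L N (z(Suc N := c)))" by blast
next
  fix y assume "y \<in> (\<Union>c<L. hball L N (z(Suc N := c)))"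
  then show "y \<in> hball L (Suc N) z" by (auto simp: hball_def)
qed

lemma hball_Suc_disj:
  "c \<noteq> c' \<Longrightarrow> hball L N (z(Suc N := c)) \<inter> hball L N (z(Suc N := c')) = {}"
  by (auto simp: hball_def)

lemma hball_0_sub: "hball L 0 z \<subseteq> {z(0 := 0)}"
  by (auto simp: hball_def hvert_def fun_eq_iff)

lemma hball_self: "z \<in> hvert L \<Longrightarrow> z \<in> hball L N z"
  by (auto simp: hball_def)

lemma card_hball:
  assumes "z \<in> hvert L"
  shows "finite (hball L N z) \<and> card (hball L N z) = L ^ N"
  using assms
proof (induction N arbitrary: z)
  case 0
  have "z(0:=0) = z" using 0 by (auto simp: hvert_def fun_eq_iff)
  then have "hball L 0 z = {z}" using hball_0_sub[of L z] hball_self[OF 0] by auto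
  then show ?case by simp
next
  case (Suc N)
  have IH: "\<And>c. c < L \<Longrightarrow> finite (hball L N (z(Suc N := c))) \<and> card (hball L N (z(Suc N := c))) = L ^ N"
    using Suc hvert_upd by blast
  have "card (\<Union>c<L. hball L N (z(Suc N := c))) = (\<Sum>c<L. card (hball L N (z(Suc N := c))))"
    by (rule card_UN_disjoint) (use IH hball_Suc_disj in auto)
  also have "\<dots> = L * L ^ N" using IH by simp
  finally show ?case using IH by (simp add: hball_Suc)
qed

lemma finite_diffset:
  assumes "x \<in> hvert L" "y \<in> hvert L"
  shows "finite {i. x i \<noteq> y i}"
proof -
  have "{i. x i \<noteq> y i} \<subseteq> {i. x i \<noteq> 0} \<union> {i. y i \<noteq> 0}" by auto
  moreover have "finite {i. x i \<noteq> 0}" "finite {i. y i \<noteq> 0}" using assms unfolding hvert_def by blast+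
  ultimately show ?thesis using finite_subset by blast
qed

lemma hdexp_sym: "hdexp x y = hdexp y x"
  unfolding hdexp_def by metis

lemma hdexp_gt:
  assumes "x \<in> hvert L" "y \<in> hvert L" "i > n" "x i \<noteq> y i"
  shows "n < hdexp x y"
proof -
  have "i \<le> hdexp x y" unfolding hdexp_def
    using assms finite_diffset[OF assms(1,2)] by (intro Max_ge) auto
  then show ?thesis using assms by simp
qed

lemma hdexp_le_in:
  assumes "x \<in> hvert L" "y \<in> hvert L" "hdexp x y \<le> n"
  shows "y \<in> hball L n x"
proof -
  have "\<forall>i>n. y i = x i" using hdexp_gt[OF assms(1,2)] assms(3) by force
  then show ?thesis using assms by (auto simp: hball_def)
qed

lemma hdexp_eq_Suc:
  assumes "x \<in> hball L N (z(Suc N := c))" "y \<in> hball L N (z(Suc N := c'))" "c \<noteq> c'"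
  shows "hdexp x y = Suc N"
proof -
  have xv: "x \<in> hvert L" and yv: "y \<in> hvert L" using assms by (auto simp: hball_def)
  have "x (Suc N) \<noteq> y (Suc N)" using assms by (auto simp: hball_def)
  moreover have "i \<le> Suc N" if "x i \<noteq> y i" for i
  proof (rule ccontr)
    assume "\<not> i \<le> Suc N"
    then have "i > N" "i \<noteq> Suc N" by auto
    then have "x i = z i" "y i = z i" using assms(1,2) unfolding hball_def by auto
    then show False using that by simp
  qed
  ultimately show ?thesis unfolding hdexp_def
    using finite_diffset[OF xv yv] by (intro Max_eqI) blast+
qed

lemma hball_eq:
  assumes "y \<in> hball L n x"
  shows "hball L n y = hball L n x"
  using assms by (auto simp: hball_def)



lemma alg1:
  fixes L M u0 S :: real
  assumes "L \<ge> 1" "M > 0" "0 < u0" "u0 \<le> M" "u0 \<le> S" "S \<le> L * M"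
  shows "S * (L * M - S) / (L * M^2) + (1 - u0 / M) - u0 * (M - u0) / (L * M^2) \<ge> 1 - S / (L * M)"
proof -
  have e: "S * (L * M - S) / (L * M^2) + (1 - u0 / M) - u0 * (M - u0) / (L * M^2) - (1 - S / (L * M))
      = (S - u0) * (L * M + M - S - u0) / (L * M^2)"
    using assms by (simp add: field_simps power2_eq_square)
  have "(S - u0) * (L * M + M - S - u0) / (L * M^2) \<ge> 0"
    using assms by (intro divide_nonneg_pos mult_nonneg_nonneg) auto
  then show ?thesis using e by linarith
qed

lemma alg2:
  fixes L M u I :: real
  assumes "L \<ge> 1" "M > 0" "0 \<le> u" "u \<le> M" "I \<ge> 0" "u > 0 \<Longrightarrow> I \<ge> 1 - u / M"
  shows "I - u * (M - u) / (L * M^2) \<ge> 0"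
proof (cases "u = 0")
  case True then show ?thesis using assms by simp
next
  case False
  have "u * (M - u) / (L * M^2) = ((M - u) / M) * (u / (L * M))"
    using assms by (simp add: field_simps power2_eq_square)
  also have "\<dots> \<le> ((M - u) / M) * 1"
  proof (rule mult_left_mono)
    have "u \<le> L * M" using assms by (metis mult_le_cancel_right1 order_trans less_le_not_le)
    then show "u / (L * M) \<le> 1" using assms by (simp add: divide_le_eq)
    show "0 \<le> (M - u) / M" using assms by simp
  qed
  also have "\<dots> = 1 - u / M" using assms by (simp add: field_simps)
  finally show ?thesis using assms False by fastforce
qed



lemma CL:
  assumes L: "L \<ge> 1" and z: "z \<in> hvert L" and U: "U \<subseteq> hball L N z" "U \<noteq> {}"
  shows "(\<Sum>x\<in>U. \<Sum>y\<in>hball L N z - U. real L / real L ^ (2 * hdexp x y))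
           \<ge> 1 - real (card U) / real L ^ N"
  using z U
proof (induction N arbitrary: z U)
  case 0
  have "finite U" using card_hball[OF 0(1)] 0(2) finite_subset by blast
  then have "card U \<ge> 1" using 0(3) by (simp add: Suc_le_eq card_gt_0_iff)
  then have "1 - real (card U) / real L ^ 0 \<le> 0" by simp
  also have "0 \<le> (\<Sum>x\<in>U. \<Sum>y\<in>hball L 0 z - U. real L / real L ^ (2 * hdexp x y))"
    by (intro sum_nonneg) auto
  finally show ?case .
next
  case (Suc N)
  define W where "W = hball L (Suc N) z"
  define Wc where "Wc c = hball L N (z(Suc N := c))" for c
  define Uc where "Uc c = U \<inter> Wc c" for c
  define M where "M = real L ^ N"
  define q where "q = real L / real L ^ (2 * Suc N)"
  define f where "f x y = real L / real L ^ (2 * hdexp x y)" for x y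
  define S where "S = real (card U)"
  define u where "u c = real (card (Uc c))" for c
  define I where "I c = (\<Sum>x\<in>Uc c. \<Sum>y\<in>Wc c - Uc c. f x y)" for c
  have zc: "z(Suc N := c) \<in> hvert L" if "c < L" for c using hvert_upd[OF Suc(2) that] by simp
  have finW: "finite W" and cardW: "card W = L * L ^ N"
    using card_hball[OF Suc(2), of "Suc N"] by (auto simp: W_def)
  have finWc: "finite (Wc c)" and cardWc: "card (Wc c) = L ^ N" if "c < L" for c
    using card_hball[OF zc[OF that], of N] by (auto simp: Wc_def)
  have WU: "W = (\<Union>c<L. Wc c)" by (simp add: W_def Wc_def hball_Suc)
  have disj: "Wc c \<inter> Wc c' = {}" if "c \<noteq> c'" for c c'
    using hball_Suc_disj[OF that] by (simp add: Wc_def)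
  have UW: "U \<subseteq> W" using Suc(3) by (simp add: W_def)
  have finU: "finite U" using finW UW finite_subset by blast
  have UU: "U = (\<Union>c<L. Uc c)" using UW WU by (auto simp: Uc_def)
  have finUc: "finite (Uc c)" for c using finU by (simp add: Uc_def)
  have M0: "M > 0" using L by (simp add: M_def)
  have Lr: "real L \<ge> 1" using L by simp
  have q_eq: "q = 1 / (real L * M^2)"
    using L by (simp add: q_def M_def power_mult power2_eq_square field_simps)
  have s1: "(\<Sum>x\<in>U. \<Sum>y\<in>W - U. f x y) = (\<Sum>c<L. \<Sum>x\<in>Uc c. \<Sum>y\<in>W - U. f x y)"
  proof -
    have "sum g (\<Union>c<L. Uc c) = (\<Sum>c<L. sum g (Uc c))" for g :: "_ \<Rightarrow> real"
      by (rule sum.UNION_disjoint) (use finUc disj in \<open>auto simp: Uc_def\<close>)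
    then show ?thesis unfolding UU[symmetric] .
  qed
  have cardc: "real (card ((W - U) - Wc c)) = real L * M - S - M + u c" if "c < L" for c
  proof -
    have a: "(W - U) - Wc c = W - (U \<union> Wc c)" by auto
    have b: "U \<union> Wc c \<subseteq> W" using UW WU that by auto
    have c: "card (U \<union> Wc c) + card (U \<inter> Wc c) = card U + card (Wc c)"
      using card_Un_Int[OF finU finWc[OF that]] by simp
    have "card ((W - U) - Wc c) = card W - card (U \<union> Wc c)"
      unfolding a using b finW by (metis card_Diff_subset finite_subset)
    moreover have "card (U \<union> Wc c) \<le> card W" using b finW card_mono by blast
    ultimately have "real (card ((W - U) - Wc c)) = real (card W) - real (card (U \<union> Wc c))"
      by simp
    then show ?thesis using c cardW cardWc[OF that]
      by (simp add: M_def S_def u_def Uc_def) (smt (verit) of_nat_add of_nat_mult of_nat_power)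
  qed
  have s2: "(\<Sum>y\<in>W - U. f x y) = (\<Sum>y\<in>Wc c - Uc c. f x y) + (real L * M - S - M + u c) * q"
    if c: "c < L" and x: "x \<in> Uc c" for c x
  proof -
    have split: "W - U = (Wc c - Uc c) \<union> ((W - U) - Wc c)" using WU c by (auto simp: Uc_def)
    have "(\<Sum>y\<in>W - U. f x y) = (\<Sum>y\<in>Wc c - Uc c. f x y) + (\<Sum>y\<in>(W - U) - Wc c. f x y)"
    proof -
      have "sum g ((Wc c - Uc c) \<union> ((W - U) - Wc c)) = sum g (Wc c - Uc c) + sum g ((W - U) - Wc c)" for g :: "_ \<Rightarrow> real"
        by (rule sum.union_disjoint) (use finW finWc[OF c] in \<open>auto simp: Uc_def\<close>)
      then show ?thesis unfolding split[symmetric] .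
    qed
    moreover have "(\<Sum>y\<in>(W - U) - Wc c. f x y) = (\<Sum>y\<in>(W - U) - Wc c. q)"
    proof (rule sum.cong)
      fix y assume y: "y \<in> (W - U) - Wc c"
      then obtain c' where c': "c' < L" "y \<in> Wc c'" using WU by auto
      then have "c' \<noteq> c" using y by auto
      then have "hdexp x y = Suc N" using x c' unfolding Uc_def Wc_def
        by (intro hdexp_eq_Suc[where z=z and c=c and c'=c']) auto
      then show "f x y = q" by (simp add: f_def q_def)
    qed simp
    ultimately show ?thesis using cardc[OF c] by simp
  qed
  have s3: "(\<Sum>x\<in>Uc c. \<Sum>y\<in>W - U. f x y) = I c + u c * ((real L * M - S - M + u c) * q)"
    if c: "c < L" for c
    using s2[OF c] by (simp add: I_def u_def sum.distrib)
  have IH: "I c \<ge> 1 - u c / M" if c: "c < L" and ne: "Uc c \<noteq> {}" for c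
  proof -
    have "Uc c \<subseteq> hball L N (z(Suc N := c))" by (auto simp: Uc_def Wc_def)
    from Suc.IH[OF zc[OF c] this ne] show ?thesis
      unfolding I_def u_def M_def f_def Wc_def .
  qed
  have I0: "I c \<ge> 0" for c unfolding I_def f_def by (intro sum_nonneg) auto
  have u_le: "u c \<le> M" if "c < L" for c
  proof -
    have "card (Uc c) \<le> card (Wc c)" using finWc[OF that] by (intro card_mono) (auto simp: Uc_def)
    then show ?thesis using cardWc[OF that] by (simp add: u_def M_def)
  qed
  have u0: "u c \<ge> 0" for c by (simp add: u_def)
  have upos: "u c > 0" if "Uc c \<noteq> {}" for c using that finUc by (simp add: u_def card_gt_0_iff)
  have Ssum: "S = (\<Sum>c<L. u c)"
  proof -
    have "card U = (\<Sum>c<L. card (Uc c))" 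
    proof -
      have "card (\<Union>c<L. Uc c) = (\<Sum>c<L. card (Uc c))"
        by (rule card_UN_disjoint) (use finUc disj in \<open>auto simp: Uc_def\<close>)
      then show ?thesis unfolding UU[symmetric] .
    qed
    then show ?thesis by (simp add: S_def u_def)
  qed
  have SLM: "S \<le> real L * M"
  proof -
    have "card U \<le> card W" using finW UW card_mono by blast
    then have "real (card U) \<le> real (L * L ^ N)" using cardW by linarith
    then show ?thesis by (simp add: S_def M_def)
  qed
  obtain c0 where c0: "c0 < L" "Uc c0 \<noteq> {}" using Suc(4) UU by auto
  define G where "G c = I c - u c * (M - u c) * q" for c
  have G0: "G c \<ge> 0" if "c < L" for c
  proof -
    have pre: "I c \<ge> 1 - u c / M" if "u c > 0"
    proof -
      have "Uc c \<noteq> {}" using that by (auto simp: u_def)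
      then show ?thesis using IH \<open>c < L\<close> by blast
    qed
    have "I c - u c * (M - u c) / (real L * M^2) \<ge> 0"
      by (rule alg2[OF Lr M0 u0 u_le[OF that] I0 pre])
    then show ?thesis unfolding G_def q_eq by simp
  qed
  have term_eq: "I c + u c * ((real L * M - S - M + u c) * q) = u c * (real L * M - S) * q + G c" for c
    by (simp add: G_def algebra_simps)
  have "(\<Sum>x\<in>U. \<Sum>y\<in>W - U. f x y) = (\<Sum>c<L. u c * (real L * M - S) * q + G c)"
    using s1 s3 term_eq by simp
  also have "\<dots> = S * (real L * M - S) * q + (\<Sum>c<L. G c)"
    by (simp add: sum.distrib Ssum sum_distrib_right)
  also have "\<dots> \<ge> S * (real L * M - S) * q + G c0"
    using member_le_sum[of c0 "{..<L}" G] G0 c0 by auto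
  finally have main: "(\<Sum>x\<in>U. \<Sum>y\<in>W - U. f x y) \<ge> S * (real L * M - S) * q + G c0" .
  have u0le: "u c0 \<le> S"
    using Ssum member_le_sum[of c0 "{..<L}" u] u0 c0 by auto
  have "S * (real L * M - S) * q + G c0 \<ge> 1 - S / (real L * M)"
    using alg1[OF Lr M0 upos[OF c0(2)] u_le[OF c0(1)] u0le SLM] IH[OF c0] unfolding G_def q_eq
    by simp
  then show ?case using main
    by (simp add: W_def f_def S_def M_def)
qed



definition Ecut :: "(nat \<Rightarrow> nat) set \<Rightarrow> (nat \<Rightarrow> nat) set \<Rightarrow> ((nat \<Rightarrow> nat) set \<Rightarrow> bool) set" where
  "Ecut V U = {\<omega>. \<forall>x\<in>U. \<forall>y\<in>V - U. \<not> \<omega> {x, y}}"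

lemma Ecut_compl: "U \<subseteq> V \<Longrightarrow> Ecut V U = Ecut V (V - U)"
  unfolding Ecut_def by (auto simp: Diff_Diff_Int Int_absorb1) (metis Diff_iff insert_commute)+

lemma zero_hvert: "L \<ge> 1 \<Longrightarrow> (\<lambda>_. 0) \<in> hvert L"
  by (simp add: hvert_def)

lemma box_edges_alt: "box_edges L N = (\<lambda>(x, y). {x, y}) ` {(x, y). x \<in> hball L N (\<lambda>_. 0) \<and> y \<in> hball L N (\<lambda>_. 0) \<and> x \<noteq> y}"
  unfolding box_edges_def by auto

lemma finite_box_edges: "L \<ge> 1 \<Longrightarrow> finite (box_edges L N)"
proof -
  assume L: "L \<ge> 1"
  have "finite (hball L N (\<lambda>_. 0))" using card_hball[OF zero_hvert[OF L]] by blast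
  have "finite {(x, y). x \<in> hball L N (\<lambda>_. 0) \<and> y \<in> hball L N (\<lambda>_. 0) \<and> x \<noteq> y}"
  proof (rule finite_subset)
    show "{(x, y). x \<in> hball L N (\<lambda>_. 0) \<and> y \<in> hball L N (\<lambda>_. 0) \<and> x \<noteq> y} \<subseteq> hball L N (\<lambda>_. 0) \<times> hball L N (\<lambda>_. 0)" by auto
  qed (use \<open>finite (hball L N (\<lambda>_. 0))\<close> in simp)
  then show ?thesis unfolding box_edges_alt by simp
qed

lemma prob_cut:
  assumes L: "L \<ge> 1" and kernel: "\<forall>e\<in>hedges L. J e \<ge> 0"
    and V: "V = hball L N (\<lambda>_. 0)" and U: "U \<subseteq> V"
  shows "measure_pmf.prob (perc_pmf L J N) (Ecut V U) = exp (- (\<Sum>x\<in>U. \<Sum>y\<in>V - U. J {x, y}))"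
proof -
  define A where "A = box_edges L N"
  define cut where "cut = (\<lambda>(x, y). {x, y}) ` (U \<times> (V - U))"
  define B where "B e = (if e \<in> cut then {False} else UNIV)" for e :: "(nat \<Rightarrow> nat) set"
  have finA: "finite A" using finite_box_edges[OF L] by (simp add: A_def)
  have finV: "finite V" using card_hball[OF zero_hvert[OF L]] V by blast
  have cutA: "cut \<subseteq> A" using U unfolding cut_def A_def box_edges_def V by auto
  have Ah: "A \<subseteq> hedges L" unfolding A_def box_edges_def hedges_def hball_def by auto
  have E: "Ecut V U = Pi A B"
    unfolding Ecut_def Pi_def B_def cut_def using cutA[unfolded cut_def] by auto
  have "measure_pmf.prob (perc_pmf L J N) (Ecut V U)
      = (\<Prod>e\<in>A. measure_pmf.prob (bernoulli_pmf (1 - exp (- J e))) (B e))"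
    unfolding E perc_pmf_def A_def by (rule measure_Pi_pmf_Pi) (use finA A_def in simp)
  also have "\<dots> = (\<Prod>e\<in>A. if e \<in> cut then exp (- J e) else 1)"
  proof (rule prod.cong)
    fix e assume e: "e \<in> A"
    then have "J e \<ge> 0" using Ah kernel by auto
    then have "0 \<le> 1 - exp (- J e)" "1 - exp (- J e) \<le> 1" by auto
    then show "measure_pmf.prob (bernoulli_pmf (1 - exp (- J e))) (B e) = (if e \<in> cut then exp (- J e) else 1)"
      by (auto simp: B_def measure_pmf_single)
  qed simp
  also have "\<dots> = (\<Prod>e\<in>cut. exp (- J e))"
    using prod.inter_restrict[OF finA, of "\<lambda>e. exp (- J e)" cut] cutA by (simp add: Int_absorb1)
  also have "\<dots> = exp (\<Sum>e\<in>cut. - J e)"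
    using finite_subset[OF cutA finA] by (simp add: exp_sum)
  also have "(\<Sum>e\<in>cut. - J e) = - (\<Sum>x\<in>U. \<Sum>y\<in>V - U. J {x, y})"
  proof -
    have inj: "inj_on (\<lambda>(x, y). {x, y}) (U \<times> (V - U))"
      by (auto simp: inj_on_def doubleton_eq_iff)
    have "(\<Sum>e\<in>cut. J e) = (\<Sum>p\<in>U \<times> (V - U). J ((\<lambda>(x, y). {x, y}) p))"
      unfolding cut_def using sum.reindex[OF inj, of J] by (simp add: comp_def)
    also have "\<dots> = (\<Sum>x\<in>U. \<Sum>y\<in>V - U. J {x, y})"
      by (simp add: sum.cartesian_product case_prod_beta)
    finally show ?thesis by (simp add: sum_negf)
  qed
  finally show ?thesis .
qed



lemma cut_bound:
  assumes L: "L \<ge> 1" and apos: "a > 0" and kernel: "\<forall>e\<in>hedges L. J e \<ge> 0"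
    and lower: "\<forall>x\<in>hvert L. \<forall>y\<in>hvert L. x \<noteq> y \<longrightarrow>
                 J {x, y} \<ge> a * real L * ln (real (hdexp x y)) / real L ^ (2 * hdexp x y)"
    and V: "V = hball L N (\<lambda>_. 0)" and U: "U \<subseteq> V" "U \<noteq> {}" and n: "n \<ge> 1"
    and sat: "\<forall>x\<in>U. \<forall>y\<in>V - U. n < hdexp x y"
  shows "measure_pmf.prob (perc_pmf L J N) (Ecut V U) \<le> real n powr (- a * (1 - real (card U) / real L ^ N))"
proof -
  define f where "f x y = real L / real L ^ (2 * hdexp x y)" for x y
  have Vh: "V \<subseteq> hvert L" unfolding V hball_def by auto
  have ln0: "ln (real n) \<ge> 0" using n by simp
  have pt: "J {x, y} \<ge> a * ln (real n) * f x y" if x: "x \<in> U" and y: "y \<in> V - U" for x y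
  proof -
    have xy: "x \<in> hvert L" "y \<in> hvert L" "x \<noteq> y" using x y U Vh by auto
    have d: "n < hdexp x y" using sat x y by auto
    have "ln (real n) \<le> ln (real (hdexp x y))" using d n by simp
    then have "a * ln (real n) * f x y \<le> a * ln (real (hdexp x y)) * f x y"
      using apos by (intro mult_right_mono mult_left_mono) (auto simp: f_def)
    also have "\<dots> = a * real L * ln (real (hdexp x y)) / real L ^ (2 * hdexp x y)"
      by (simp add: f_def)
    also have "\<dots> \<le> J {x, y}" using lower xy by auto
    finally show ?thesis .
  qed
  have "(\<Sum>x\<in>U. \<Sum>y\<in>V - U. J {x, y}) \<ge> (\<Sum>x\<in>U. \<Sum>y\<in>V - U. a * ln (real n) * f x y)"
    using pt by (intro sum_mono) auto
  also have "(\<Sum>x\<in>U. \<Sum>y\<in>V - U. a * ln (real n) * f x y) = a * ln (real n) * (\<Sum>x\<in>U. \<Sum>y\<in>V - U. f x y)"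
    by (simp add: sum_distrib_left)
  finally have s1: "(\<Sum>x\<in>U. \<Sum>y\<in>V - U. J {x, y}) \<ge> a * ln (real n) * (\<Sum>x\<in>U. \<Sum>y\<in>V - U. f x y)" .
  have "(\<Sum>x\<in>U. \<Sum>y\<in>V - U. f x y) \<ge> 1 - real (card U) / real L ^ N"
    using CL[OF L zero_hvert[OF L], of U N] U V by (simp add: f_def)
  then have "a * ln (real n) * (\<Sum>x\<in>U. \<Sum>y\<in>V - U. f x y) \<ge> a * ln (real n) * (1 - real (card U) / real L ^ N)"
    using apos ln0 by (intro mult_left_mono) auto
  with s1 have s2: "(\<Sum>x\<in>U. \<Sum>y\<in>V - U. J {x, y}) \<ge> a * ln (real n) * (1 - real (card U) / real L ^ N)"
    by linarith
  have "measure_pmf.prob (perc_pmf L J N) (Ecut V U) = exp (- (\<Sum>x\<in>U. \<Sum>y\<in>V - U. J {x, y}))"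
    by (rule prob_cut[OF L kernel V U(1)])
  also have "\<dots> \<le> exp (- (a * ln (real n) * (1 - real (card U) / real L ^ N)))"
    using s2 by simp
  also have "\<dots> = real n powr (- a * (1 - real (card U) / real L ^ N))"
    using n by (simp add: powr_def algebra_simps)
  finally show ?thesis .
qed

lemma block_sub:
  assumes "x \<in> hball L (n + k) (\<lambda>_. 0)"
  shows "hball L n x \<subseteq> hball L (n + k) (\<lambda>_. 0)"
  using assms by (auto simp: hball_def)

lemma blocks_cover:
  "\<Union> (blocks L n k) = hball L (n + k) (\<lambda>_. 0)"
proof
  show "\<Union> (blocks L n k) \<subseteq> hball L (n + k) (\<lambda>_. 0)" using block_sub unfolding blocks_def by blast
  show "hball L (n + k) (\<lambda>_. 0) \<subseteq> \<Union> (blocks L n k)"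
  proof
    fix y assume y: "y \<in> hball L (n + k) (\<lambda>_. 0)"
    then have "y \<in> hball L n y" by (auto simp: hball_def)
    then show "y \<in> \<Union> (blocks L n k)" using y by (auto simp: blocks_def)
  qed
qed

lemma blocks_eq:
  assumes "B \<in> blocks L n k" "y \<in> B"
  shows "B = hball L n y"
  using assms hball_eq by (auto simp: blocks_def)

lemma block_of:
  assumes "y \<in> hball L (n + k) (\<lambda>_. 0)"
  shows "hball L n y \<in> blocks L n k" "y \<in> hball L n y"
  using assms by (auto simp: blocks_def hball_def)

lemma sat_union:
  assumes S: "S \<subseteq> blocks L n k" and V: "V = hball L (n + k) (\<lambda>_. 0)"
  shows "\<forall>x\<in>\<Union>S. \<forall>y\<in>V - \<Union>S. n < hdexp x y"
proof (intro ballI)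
  fix x y assume x: "x \<in> \<Union>S" and y: "y \<in> V - \<Union>S"
  then obtain B where B: "B \<in> S" "x \<in> B" by auto
  have Bb: "B \<in> blocks L n k" using B S by auto
  have xv: "x \<in> hvert L" using Bb B by (auto simp: blocks_def hball_def)
  have yv: "y \<in> hvert L" using y V by (auto simp: hball_def)
  show "n < hdexp x y"
  proof (rule ccontr)
    assume "\<not> n < hdexp x y"
    then have "y \<in> hball L n x" using hdexp_le_in[OF xv yv] by simp
    moreover have "B = hball L n x" using blocks_eq[OF Bb B(2)] .
    ultimately show False using y B by auto
  qed
qed

lemma sat_compl:
  assumes "\<forall>x\<in>U. \<forall>y\<in>V - U. n < hdexp x y" "U \<subseteq> V"
  shows "\<forall>x\<in>V - U. \<forall>y\<in>V - (V - U). n < hdexp x y"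
  using assms hdexp_sym by (metis Diff_Diff_Int Diff_iff Int_iff)

lemma card_union_blocks:
  assumes L: "L \<ge> 1" and S: "S \<subseteq> blocks L n k"
  shows "card (\<Union>S) = card S * L ^ n"
proof -
  have fin: "finite B \<and> card B = L ^ n" if "B \<in> blocks L n k" for B
    using that card_hball by (auto simp: blocks_def hball_def)
  have finS: "finite S"
  proof -
    have "finite (\<Union>S)"
      using card_hball[OF zero_hvert[OF L], of "n+k"] blocks_cover[of L n k] S
      by (metis Sup_subset_mono finite_subset)
    then show ?thesis by (rule finite_UnionD)
  qed
  have "card (\<Union>S) = (\<Sum>B\<in>S. card B)"
  proof (rule card_Union_disjoint)
    show "pairwise disjnt S"
      unfolding pairwise_def disjnt_def
    proof (intro ballI impI)
      fix B B' assume "B \<in> S" "B' \<in> S" "B \<noteq> B'"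
      then show "B \<inter> B' = {}" using S blocks_eq by blast
    qed
  qed (use fin S in auto)
  also have "\<dots> = (\<Sum>B\<in>S. L ^ n)" using fin S by (intro sum.cong) auto
  also have "\<dots> = card S * L ^ n" by simp
  finally show ?thesis .
qed

lemma card_blocks:
  assumes L: "L \<ge> 1"
  shows "finite (blocks L n k) \<and> card (blocks L n k) \<le> L ^ k"
proof -
  define P where "P = PiE {Suc n..n + k} (\<lambda>_. {..<L})"
  define F where "F g = hball L n (\<lambda>i. if i \<in> {Suc n..n + k} then g i else 0)" for g :: "nat \<Rightarrow> nat"
  have sub: "blocks L n k \<subseteq> F ` P"
  proof
    fix B assume "B \<in> blocks L n k"
    then obtain x where x: "x \<in> hball L (n + k) (\<lambda>_. 0)" "B = hball L n x" by (auto simp: blocks_def)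
    have "restrict x {Suc n..n + k} \<in> P" using x by (auto simp: P_def hball_def hvert_def)
    moreover have "F (restrict x {Suc n..n + k}) = B"
    proof -
      have e: "\<forall>i>n. (if i \<in> {Suc n..n + k} then restrict x {Suc n..n + k} i else 0) = x i"
        using x(1) by (auto simp: hball_def)
      show ?thesis unfolding F_def x(2) hball_def using e by auto
    qed
    ultimately show "B \<in> F ` P" by force
  qed
  have fP: "finite P" "card P = L ^ k" by (auto simp: P_def card_PiE finite_PiE)
  have "card (blocks L n k) \<le> card (F ` P)" using sub fP by (intro card_mono) auto
  also have "\<dots> \<le> card P" using fP(1) by (rule card_image_le)
  finally have c: "card (blocks L n k) \<le> L ^ k" using fP by simp
  have "finite (F ` P)" using fP(1) by simp
  then show ?thesis using finite_subset[OF sub] c by blast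
qed



lemma union_bound:
  fixes p :: "'a pmf" and E :: "'b set \<Rightarrow> 'a set"
  assumes X: "finite X" "card X \<le> K" and FX: "F \<subseteq> Pow X" and b: "b \<ge> 0"
    and each: "\<forall>S\<in>F. measure_pmf.prob p (E S) \<le> b" and ev: "ev \<subseteq> (\<Union>S\<in>F. E S)"
  shows "measure_pmf.prob p ev \<le> 2 ^ K * b"
proof -
  have "finite (Pow X)" using X(1) by simp
  then have finF: "finite F" using FX by (rule finite_subset[rotated])
  have "measure_pmf.prob p ev \<le> measure_pmf.prob p (\<Union>S\<in>F. E S)"
    using ev by (rule measure_pmf.finite_measure_mono) simp
  also have "\<dots> \<le> (\<Sum>S\<in>F. measure_pmf.prob p (E S))"
    using finF by (intro measure_pmf.finite_measure_subadditive_finite) auto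
  also have "\<dots> \<le> (\<Sum>S\<in>F. b)" using each by (intro sum_mono) auto
  also have "\<dots> = real (card F) * b" by simp
  also have "\<dots> \<le> real (2 ^ K) * b"
  proof (rule mult_right_mono[OF _ b])
    have "card F \<le> card (Pow X)" using FX X by (intro card_mono) auto
    also have "\<dots> = 2 ^ card X" using X by (simp add: card_Pow)
    also have "\<dots> \<le> 2 ^ K" using X by (intro power_increasing) auto
    finally show "real (card F) \<le> real (2 ^ K)" by linarith
  qed
  finally show ?thesis by simp
qed

lemma reach_bl:
  assumes "(block_adj L n k \<omega>)\<^sup>*\<^sup>* B1 B" "B1 \<in> blocks L n k"
  shows "B \<in> blocks L n k"
  using assms by (induction rule: rtranclp_induct) (auto simp: block_adj_def)

lemma in_Ecut:
  assumes B1: "B1 \<in> blocks L n k" and V: "V = hball L (n + k) (\<lambda>_. 0)"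
  shows "\<omega> \<in> Ecut V (\<Union>{B. (block_adj L n k \<omega>)\<^sup>*\<^sup>* B1 B})"
  unfolding Ecut_def
proof (intro CollectI ballI notI)
  fix x y assume x: "x \<in> \<Union>{B. (block_adj L n k \<omega>)\<^sup>*\<^sup>* B1 B}"
    and y: "y \<in> V - \<Union>{B. (block_adj L n k \<omega>)\<^sup>*\<^sup>* B1 B}" and o: "\<omega> {x, y}"
  from x obtain B where B: "(block_adj L n k \<omega>)\<^sup>*\<^sup>* B1 B" "x \<in> B" by auto
  have Bb: "B \<in> blocks L n k" using reach_bl[OF B(1) B1] .
  have yV: "y \<in> hball L (n + k) (\<lambda>_. 0)" using y V by auto
  define B' where "B' = hball L n y"
  have B'b: "B' \<in> blocks L n k" and yB': "y \<in> B'" using block_of[OF yV] by (auto simp: B'_def)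
  have "\<not> (block_adj L n k \<omega>)\<^sup>*\<^sup>* B1 B'" using y yB' by auto
  then have "B \<noteq> B'" using B(1) by auto
  then have "block_adj L n k \<omega> B B'" using Bb B'b B(2) yB' o by (auto simp: block_adj_def)
  then have "(block_adj L n k \<omega>)\<^sup>*\<^sup>* B1 B'" using rtranclp.rtrancl_into_rtrancl[OF B(1)] by blast
  then show False using \<open>\<not> (block_adj L n k \<omega>)\<^sup>*\<^sup>* B1 B'\<close> by simp
qed

lemma blocks_nonempty: "B \<in> blocks L n k \<Longrightarrow> B \<noteq> {}"
  unfolding blocks_def using block_of(2) by blast

theorem lemma5p3:
  fixes L :: nat and a :: real and J :: "(nat \<Rightarrow> nat) set \<Rightarrow> real"
  assumes L2: "L \<ge> 2"
    and apos: "a > 0"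
    and kernel: "\<forall>e\<in>hedges L. J e \<ge> 0"
    and lower: "\<forall>x\<in>hvert L. \<forall>y\<in>hvert L. x \<noteq> y \<longrightarrow>
                 J {x, y} \<ge> a * real L * ln (real (hdexp x y)) / real L ^ (2 * hdexp x y)"
  shows "\<forall>k::nat. \<exists>C::real. \<forall>n::nat. n \<ge> 1 \<longrightarrow> (\<forall>m\<in>{1..L ^ k}.
           measure_pmf.prob (perc_pmf L J (n + k)) {\<omega>. \<not> blocks_connected L n k \<omega>}
             \<le> C * real n powr (- a / 2)
         \<and> measure_pmf.prob (perc_pmf L J (n + k)) {\<omega>. has_cluster_of_size L n k \<omega> m}
             \<le> C * real n powr (- a * (1 - real m / real L ^ k)))"
proof (intro allI)
  fix k :: nat
  have L1: "L \<ge> 1" using L2 by simp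
  show "\<exists>C::real. \<forall>n::nat. n \<ge> 1 \<longrightarrow> (\<forall>m\<in>{1..L ^ k}.
           measure_pmf.prob (perc_pmf L J (n + k)) {\<omega>. \<not> blocks_connected L n k \<omega>}
             \<le> C * real n powr (- a / 2)
         \<and> measure_pmf.prob (perc_pmf L J (n + k)) {\<omega>. has_cluster_of_size L n k \<omega> m}
             \<le> C * real n powr (- a * (1 - real m / real L ^ k)))"
  proof (rule exI[of _ "2 ^ (L ^ k)"], intro allI impI ballI conjI)
    fix n m :: nat assume n: "n \<ge> 1" and m: "m \<in> {1..L ^ k}"
    define V where "V = hball L (n + k) (\<lambda>_. 0)"
    have finV: "finite V" and cardV: "card V = L ^ (n + k)"
      using card_hball[OF zero_hvert[OF L1]] by (auto simp: V_def)
    have finbl: "finite (blocks L n k)" and cardbl: "card (blocks L n k) \<le> L ^ k"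
      using card_blocks[OF L1] by auto
    have bound: "measure_pmf.prob (perc_pmf L J (n + k)) (Ecut V U)
        \<le> real n powr (- a * (1 - real (card U) / real L ^ (n + k)))"
      if "U \<subseteq> V" "U \<noteq> {}" "\<forall>x\<in>U. \<forall>y\<in>V - U. n < hdexp x y" for U
      by (rule cut_bound[OF L1 apos kernel lower V_def that(1,2) n that(3)])
    show "measure_pmf.prob (perc_pmf L J (n + k)) {\<omega>. \<not> blocks_connected L n k \<omega>}
             \<le> 2 ^ (L ^ k) * real n powr (- a / 2)"
    proof (rule union_bound[OF finbl cardbl, where E = "\<lambda>S. Ecut V (\<Union>S)"
          and F = "{S. S \<subseteq> blocks L n k \<and> \<Union>S \<noteq> {} \<and> \<Union>S \<noteq> V}"])
      show "{S. S \<subseteq> blocks L n k \<and> \<Union>S \<noteq> {} \<and> \<Union>S \<noteq> V} \<subseteq> Pow (blocks L n k)" by auto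
      show "0 \<le> real n powr (- a / 2)" by simp
      show "\<forall>S\<in>{S. S \<subseteq> blocks L n k \<and> \<Union>S \<noteq> {} \<and> \<Union>S \<noteq> V}.
              measure_pmf.prob (perc_pmf L J (n + k)) (Ecut V (\<Union>S)) \<le> real n powr (- a / 2)"
      proof
        fix S assume "S \<in> {S. S \<subseteq> blocks L n k \<and> \<Union>S \<noteq> {} \<and> \<Union>S \<noteq> V}"
        then have S: "S \<subseteq> blocks L n k" "\<Union>S \<noteq> {}" "\<Union>S \<noteq> V" by auto
        define U where "U = \<Union>S"
        have UV: "U \<subseteq> V" using S(1) blocks_cover[of L n k] by (auto simp: U_def V_def)
        have satU: "\<forall>x\<in>U. \<forall>y\<in>V - U. n < hdexp x y" using sat_union[OF S(1) V_def] by (simp add: U_def)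
        have finU: "finite U" using UV finV finite_subset by blast
        have cU: "card (V - U) = card V - card U" using UV finV by (simp add: card_Diff_subset finite_subset)
        have cUle: "card U \<le> card V" using UV finV card_mono by blast
        have key: "real n powr (- a * (1 - real (card W) / real L ^ (n + k))) \<le> real n powr (- a / 2)"
          if "2 * card W \<le> card V" for W
        proof (rule powr_mono)
          have "real (2 * card W) \<le> real (card V)" using that by (simp only: of_nat_le_iff)
          then have h: "2 * real (card W) \<le> real L ^ (n + k)" using cardV by simp
          have pos: "real L ^ (n + k) > 0" using L1 by simp
          have "real (card W) / real L ^ (n + k) \<le> 1 / 2"
            using h pos by (simp add: divide_le_eq)
          then have "a * (1 / 2) \<le> a * (1 - real (card W) / real L ^ (n + k))"
            using apos by (intro mult_left_mono) auto
          then show "- a * (1 - real (card W) / real L ^ (n + k)) \<le> - a / 2" by simp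
        qed (use n in simp)
        show "measure_pmf.prob (perc_pmf L J (n + k)) (Ecut V (\<Union>S)) \<le> real n powr (- a / 2)"
        proof (cases "2 * card U \<le> card V")
          case True
          have "measure_pmf.prob (perc_pmf L J (n + k)) (Ecut V U) \<le> real n powr (- a * (1 - real (card U) / real L ^ (n + k)))"
            by (rule bound[OF UV _ satU]) (use S(2) U_def in simp)
          also have "\<dots> \<le> real n powr (- a / 2)" by (rule key[OF True])
          finally show ?thesis by (simp add: U_def)
        next
          case False
          have le: "2 * card (V - U) \<le> card V" using False cU cUle by linarith
          have ne: "V - U \<noteq> {}" using UV S(3) by (auto simp: U_def)
          have "Ecut V (\<Union>S) = Ecut V (V - U)" using Ecut_compl[OF UV] by (simp add: U_def)
          have "measure_pmf.prob (perc_pmf L J (n + k)) (Ecut V (V - U)) \<le> real n powr (- a * (1 - real (card (V - U)) / real L ^ (n + k)))"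
            by (rule bound[OF _ ne sat_compl[OF satU UV]]) auto
          also have "\<dots> \<le> real n powr (- a / 2)" by (rule key[OF le])
          finally show ?thesis using \<open>Ecut V (\<Union>S) = Ecut V (V - U)\<close> by simp
        qed
      qed
      show "{\<omega>. \<not> blocks_connected L n k \<omega>} \<subseteq>
              (\<Union>S\<in>{S. S \<subseteq> blocks L n k \<and> \<Union>S \<noteq> {} \<and> \<Union>S \<noteq> V}. Ecut V (\<Union>S))"
      proof
        fix \<omega> assume "\<omega> \<in> {\<omega>. \<not> blocks_connected L n k \<omega>}"
        then obtain B1 B2 where B: "B1 \<in> blocks L n k" "B2 \<in> blocks L n k"
          "\<not> (block_adj L n k \<omega>)\<^sup>*\<^sup>* B1 B2" by (auto simp: blocks_connected_def)
        define S where "S = {B. (block_adj L n k \<omega>)\<^sup>*\<^sup>* B1 B}"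
        have Sb: "S \<subseteq> blocks L n k" using reach_bl B(1) by (auto simp: S_def)
        have "B1 \<in> S" by (simp add: S_def)
        then have ne: "\<Union>S \<noteq> {}" using blocks_nonempty[OF B(1)] by auto
        obtain x2 where x2: "x2 \<in> V" "B2 = hball L n x2" using B(2) by (auto simp: blocks_def V_def)
        have x2B2: "x2 \<in> B2" using block_of[of x2 L n k] x2 by (simp add: V_def)
        have "x2 \<notin> \<Union>S"
        proof
          assume "x2 \<in> \<Union>S"
          then obtain B where "B \<in> S" "x2 \<in> B" by auto
          then have "B = B2" using blocks_eq[of B L n k x2] Sb x2 by auto
          then show False using \<open>B \<in> S\<close> B(3) by (simp add: S_def)
        qed
        then have nV: "\<Union>S \<noteq> V" using x2 by auto
        have "\<omega> \<in> Ecut V (\<Union>S)" unfolding S_def by (rule in_Ecut[OF B(1) V_def])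
        then show "\<omega> \<in> (\<Union>S\<in>{S. S \<subseteq> blocks L n k \<and> \<Union>S \<noteq> {} \<and> \<Union>S \<noteq> V}. Ecut V (\<Union>S))"
          using Sb ne nV by blast
      qed
    qed
    show "measure_pmf.prob (perc_pmf L J (n + k)) {\<omega>. has_cluster_of_size L n k \<omega> m}
             \<le> 2 ^ (L ^ k) * real n powr (- a * (1 - real m / real L ^ k))"
    proof (rule union_bound[OF finbl cardbl, where E = "\<lambda>S. Ecut V (\<Union>S)"
          and F = "{S. S \<subseteq> blocks L n k \<and> card S = m}"])
      show "{S. S \<subseteq> blocks L n k \<and> card S = m} \<subseteq> Pow (blocks L n k)" by auto
      show "0 \<le> real n powr (- a * (1 - real m / real L ^ k))" by simp
      show "\<forall>S\<in>{S. S \<subseteq> blocks L n k \<and> card S = m}.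
              measure_pmf.prob (perc_pmf L J (n + k)) (Ecut V (\<Union>S)) \<le> real n powr (- a * (1 - real m / real L ^ k))"
      proof
        fix S assume "S \<in> {S. S \<subseteq> blocks L n k \<and> card S = m}"
        then have S: "S \<subseteq> blocks L n k" "card S = m" by auto
        have UV: "\<Union>S \<subseteq> V" using S(1) blocks_cover[of L n k] by (auto simp: V_def)
        have cU: "card (\<Union>S) = m * L ^ n" using card_union_blocks[OF L1 S(1)] S(2) by simp
        have "card (\<Union>S) > 0" using cU m L1 by simp
        then have ne: "\<Union>S \<noteq> {}" by (metis card.empty less_irrefl)
        have r: "real (card (\<Union>S)) / real L ^ (n + k) = real m / real L ^ k"
          using cU L1 by (simp add: power_add field_simps)
        show "measure_pmf.prob (perc_pmf L J (n + k)) (Ecut V (\<Union>S)) \<le> real n powr (- a * (1 - real m / real L ^ k))"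
          using bound[OF UV ne sat_union[OF S(1) V_def]] r by simp
      qed
      show "{\<omega>. has_cluster_of_size L n k \<omega> m} \<subseteq> (\<Union>S\<in>{S. S \<subseteq> blocks L n k \<and> card S = m}. Ecut V (\<Union>S))"
      proof
        fix \<omega> assume "\<omega> \<in> {\<omega>. has_cluster_of_size L n k \<omega> m}"
        then obtain B1 where B: "B1 \<in> blocks L n k" "card {B'. (block_adj L n k \<omega>)\<^sup>*\<^sup>* B1 B'} = m"
          by (auto simp: has_cluster_of_size_def)
        define S where "S = {B. (block_adj L n k \<omega>)\<^sup>*\<^sup>* B1 B}"
        have Sb: "S \<subseteq> blocks L n k" using reach_bl B(1) by (auto simp: S_def)
        have "\<omega> \<in> Ecut V (\<Union>S)" unfolding S_def by (rule in_Ecut[OF B(1) V_def])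
        then show "\<omega> \<in> (\<Union>S\<in>{S. S \<subseteq> blocks L n k \<and> card S = m}. Ecut V (\<Union>S))"
          using Sb B(2) by (auto simp: S_def)
      qed
    qed
  qed
qed


end
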